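(* Every prime number that is antipalindromic in base $3$ has a base-$3$ expansion with an odd number $n$ of digits, where $n\ge 3$.
   Context: For an integer $b\ge 2$, every natural number $m$ has a unique base-$b$ expansion $m=a_nb^n+\dots+a_1b+a_0$ with $a_0,\dots,a_n\in\{0,1,\dots,b-1\}$ and $a_n\neq 0$. The number $m$ is antipalindromic in base $b$ if $a_j=b-1-a_{n-j}$ for all $j\in\{0,1,\dots,n\}$. *)

theory Defs
  imports "HOL-Computational_Algebra.Primes"
begin

fun base_digits :: "nat \<Rightarrow> nat \<Rightarrow> nat list" where
  "base_digits b m = (if m = 0 \<or> b < 2 then [] else (m mod b) # base_digits b (m div b))"

declare base_digits.simps[simp del]

definition antipalindromic :: "nat \<Rightarrow> nat \<Rightarrow> bool" where
  "antipalindromic b m \<longleftrightarrow> m \<noteq> 0 \<and>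
     (let ds = base_digits b m; n = length ds - 1 in
        \<forall>j \<le> n. ds ! j = b - 1 - ds ! (n - j))"

end

theory Submission
  imports Defs
begin

lemma bd0[simp]: "base_digits b 0 = []"
  by (subst base_digits.simps) simp

lemma bd_step: "m \<noteq> 0 \<Longrightarrow> base_digits 3 m = (m mod 3) # base_digits 3 (m div 3)"
  by (subst base_digits.simps) simp

lemma bd_mod2: "m mod 2 = sum_list (base_digits 3 m) mod 2"
proof (induction m rule: less_induct)
  case (less m)
  show ?case
  proof (cases "m = 0")
    case True then show ?thesis by (simp add: bd_step)
  next
    case False
    then have "base_digits 3 m = (m mod 3) # base_digits 3 (m div 3)"
      by (simp add: bd_step)
    moreover have "(m div 3) mod 2 = sum_list (base_digits 3 (m div 3)) mod 2"
      using less False by simp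
    moreover have "m = 3 * (m div 3) + m mod 3" by simp
    ultimately show ?thesis
    proof -
      assume e: "base_digits 3 m = (m mod 3) # base_digits 3 (m div 3)"
        "(m div 3) mod 2 = sum_list (base_digits 3 (m div 3)) mod 2"
        "m = 3 * (m div 3) + m mod 3"
      have k: "\<And>q r s::nat. q mod 2 = s mod 2 \<Longrightarrow> (3*q + r) mod 2 = (r + s) mod 2"
        by presburger
      have "m mod 2 = (3 * (m div 3) + m mod 3) mod 2" using e(3) by simp
      also have "\<dots> = (m mod 3 + sum_list (base_digits 3 (m div 3))) mod 2"
        using k[OF e(2)] .
      finally show ?thesis using e(1) by simp
    qed
  qed
qed

lemma bd_lt: "d \<in> set (base_digits 3 m) \<Longrightarrow> d < 3"
proof (induction m rule: less_induct)
  case (less m)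
  show ?case
  proof (cases "m = 0")
    case True then show ?thesis using less by (simp add: bd_step)
  next
    case False
    then have "base_digits 3 m = (m mod 3) # base_digits 3 (m div 3)"
      by (simp add: bd_step)
    then show ?thesis using less.IH[of "m div 3"] less.prems False by auto
  qed
qed

lemma anti_sum:
  assumes "antipalindromic 3 m"
  shows "sum_list (base_digits 3 m) = length (base_digits 3 m)"
proof -
  define ds where "ds = base_digits 3 m"
  define L where "L = length ds"
  have A0: "m \<noteq> 0 \<and> (\<forall>j \<le> L - 1. ds ! j = 3 - 1 - ds ! (L - 1 - j))"
    using assms unfolding antipalindromic_def ds_def[symmetric] L_def[symmetric] Let_def by blast
  then have A: "\<forall>j \<le> L - 1. ds ! j = 3 - 1 - ds ! (L - 1 - j)" by (rule conjunct2)
  have B: "ds ! j + ds ! (L - 1 - j) = 2" if "j < L" for j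
  proof -
    have "L - 1 - j < L" using that by simp
    then have "ds ! (L - 1 - j) \<in> set ds" unfolding L_def by (rule nth_mem)
    then have "ds ! (L - 1 - j) < 3" using bd_lt[of "ds ! (L - 1 - j)" m] unfolding ds_def by blast
    moreover have "j \<le> L - 1" using that by simp
    then have "ds ! j = 3 - 1 - ds ! (L - 1 - j)" using A by blast
    ultimately show ?thesis by simp
  qed
  have "sum_list ds = (\<Sum>j<L. ds ! j)" by (simp add: L_def sum_list_sum_nth atLeast0LessThan)
  moreover have "sum_list (rev ds) = (\<Sum>j<L. ds ! (L - 1 - j))"
    by (simp add: L_def sum_list_sum_nth atLeast0LessThan rev_nth)
  moreover have "(\<Sum>j<L. ds ! j) + (\<Sum>j<L. ds ! (L - 1 - j)) = (\<Sum>j<L. 2)"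
  proof -
    have "(\<Sum>j<L. ds ! j) + (\<Sum>j<L. ds ! (L - 1 - j)) = (\<Sum>j<L. ds ! j + ds ! (L - 1 - j))"
      by (simp only: sum.distrib)
    also have "\<dots> = (\<Sum>j<L. 2)"
      by (rule sum.cong[OF refl], rule B) simp
    finally show ?thesis .
  qed
  ultimately have "2 * sum_list ds = 2 * L" by simp
  then show ?thesis by (simp add: ds_def L_def)
qed

theorem mainTheorem7:
  fixes p :: nat
  assumes "prime p" and "antipalindromic 3 p"
  shows "odd (length (base_digits 3 p)) \<and> length (base_digits 3 p) \<ge> 3"
proof -
  have S: "sum_list (base_digits 3 p) = length (base_digits 3 p)" using anti_sum assms(2) .
  have p0: "p \<noteq> 0" using assms(2) unfolding antipalindromic_def by simp
  have D: "base_digits 3 p = (p mod 3) # base_digits 3 (p div 3)"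
    using p0 by (simp add: bd_step)
  have two: "base_digits 3 2 = [2]"
    by (simp add: bd_step)
  have odd: "odd (length (base_digits 3 p))"
  proof (rule ccontr)
    assume "\<not> odd (length (base_digits 3 p))"
    then have "even (sum_list (base_digits 3 p))" using S by simp
    then have "even p" using bd_mod2[of p] by (simp add: even_iff_mod_2_eq_zero)
    moreover have "p \<ge> 2" using assms(1) prime_ge_2_nat by blast
    moreover have "\<not> p > 2" using assms(1) prime_odd_nat \<open>even p\<close> by blast
    ultimately have "p = 2" by linarith
    then show False using S two by simp
  qed
  moreover have "length (base_digits 3 p) \<noteq> 1"
  proof
    assume "length (base_digits 3 p) = 1"
    then have "base_digits 3 (p div 3) = []" using D by simp
    then have "p div 3 = 0" using bd_step by fastforce
    then have "p < 3" by simp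
    then have "sum_list (base_digits 3 p) = p" using D \<open>base_digits 3 (p div 3) = []\<close> by simp
    then have "p = 1" using S \<open>length (base_digits 3 p) = 1\<close> by simp
    then show False using assms(1) by simp
  qed
  ultimately show ?thesis
  proof -
    assume a: "odd (length (base_digits 3 p))" "length (base_digits 3 p) \<noteq> 1"
    have "length (base_digits 3 p) \<noteq> 2" using a(1) by presburger
    moreover have "length (base_digits 3 p) \<noteq> 0" using D by simp
    ultimately show ?thesis using a by linarith
  qed
qed

end
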